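(* Let $\mathsf P'\subset\mathbb R^m$ be a $(\mu',\epsilon')$-net, $0<\Gamma_0\le1$, and let $\tau\subseteq\mathsf P'$ be a $(k+1)$-dimensional forbidden configuration. If $$0\le\delta_0\le\frac{\mu'^2\Gamma_0^k}{6},$$ then for every $p\in\tau$ we have $R(\tau_p)<\infty$, $$d\big(p,S(\tau_p)\big)\le\Big(\frac{84}{\mu'^3}\frac{\delta_0}{\Gamma_0^k}+\frac{216}{\mu'^3}\Gamma_0\Big)R(\tau_p),\qquad\text{and}\qquad R(\tau_p)<\Big(1+\frac{3\delta_0}{\mu'\Gamma_0^k}\Big)\epsilon'.$$ In particular (since $k\le m$), if $\delta_0\le\mu'^2\Gamma_0^m/6$ then $\tau$ has the $\alpha_0$-hoop property with $\alpha_0=(6/\mu')^3(\Gamma_0+\delta_0/\Gamma_0^m)$.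
   Context: Let $d(x,X)$ denote Euclidean distance from a point to a set; $B(c,r)$ is the open ball. For a finite $\mathsf P\subset\mathbb R^m$ and $\epsilon>0$, $\mathsf P$ is $\epsilon$-dense if $d(x,\mathsf P\cup\partial\,\mathrm{conv}(\mathsf P))<\epsilon$ for every $x\in\mathrm{conv}(\mathsf P)$; it is $\mu\epsilon$-separated if $\|p-q\|\ge\mu\epsilon$ for all distinct $p,q\in\mathsf P$. For $0<\mu\le1$, $\mathsf P$ is a $(\mu,\epsilon)$-net if it is $\epsilon$-dense and $\mu\epsilon$-separated. A simplex is a nonempty finite subset $\sigma\subset\mathbb R^m$ (vertices need not be affinely independent); $\dim\sigma=|\sigma|-1$; faces are nonempty subsets. For $p\in\sigma$, $\sigma_p=\sigma\setminus\{p\}$. $L(\sigma)$ is the largest distance between vertices. Altitude $D(p,\sigma)=d(p,\mathrm{aff}(\sigma_p))$. Thickness of a $j$-simplex: $\Upsilon(\sigma)=1$ if $j=0$, else $\min_{p}D(p,\sigma)/(jL(\sigma))$. $\sigma$ is $\Gamma_0$-good if every $j$-face $\sigma^j$ satisfies $\Upsilon(\sigma^j)\ge\Gamma_0^j$; $\Gamma_0$-bad otherwise; a $\Gamma_0$-flake is a $\Gamma_0$-bad simplex whose proper faces are all $\Gamma_0$-good. A circumscribing ball of $\sigma$ is an open ball whose boundary contains all vertices of $\sigma$. If one exists, the circumcentre $c(\sigma)$ and circumradius $R(\sigma)$ are the centre and radius of the smallest one (write $R(\sigma)<\infty$); otherwise $R(\sigma)=\infty$. The circumsphere is $S(\sigma)=\partial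 B(c(\sigma),R(\sigma))\cap\mathrm{aff}(\sigma)$. Forbidden configuration: given finite $\mathsf P'\subset\mathbb R^m$ and parameters $\mu',\epsilon'>0$, $0<\Gamma_0\le1$, $\delta_0\ge0$, a $(k+1)$-simplex $\tau\subseteq\mathsf P'$ with $k\le m$ is a forbidden configuration if it is a $\Gamma_0$-flake and there exist $p\in\tau$ and a circumscribing ball $B(C,R)$ of $\tau_p$ with $R<\epsilon'$ and $\big|\,\|p-C\|-R\,\big|\le\delta_0\mu'\epsilon'$. A simplex $\tau$ has the $\alpha_0$-hoop property ($\alpha_0>0$) if for every $p\in\tau$, $R(\tau_p)<\infty$ and $d(p,S(\tau_p))\le\alpha_0R(\tau_p)$. *)

theory Defs
  imports "HOL-Analysis.Analysis"
begin

text \<open>Points live in an arbitrary Euclidean space 'a; the ambient dimension m is DIM('a).\<close>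

definition eps_dense :: "real \<Rightarrow> 'a::euclidean_space set \<Rightarrow> bool" where
  "eps_dense \<epsilon> P \<longleftrightarrow>
     (\<forall>x \<in> convex hull P. infdist x (P \<union> frontier (convex hull P)) < \<epsilon>)"

definition separated :: "real \<Rightarrow> 'a::euclidean_space set \<Rightarrow> bool" where
  "separated s P \<longleftrightarrow> (\<forall>p\<in>P. \<forall>q\<in>P. p \<noteq> q \<longrightarrow> s \<le> dist p q)"

definition is_net :: "real \<Rightarrow> real \<Rightarrow> 'a::euclidean_space set \<Rightarrow> bool" where
  "is_net \<mu> \<epsilon> P \<longleftrightarrow> finite P \<and> 0 < \<epsilon> \<and> 0 < \<mu> \<and> \<mu> \<le> 1
     \<and> eps_dense \<epsilon> P \<and> separated (\<mu> * \<epsilon>) P"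

text \<open>Simplices are nonempty finite sets of points; dimension = card - 1.\<close>

definition sdim :: "'a set \<Rightarrow> nat" where
  "sdim \<sigma> = card \<sigma> - 1"

definition longest_edge :: "'a::euclidean_space set \<Rightarrow> real" where
  "longest_edge \<sigma> = diameter \<sigma>"

definition altitude :: "'a::euclidean_space \<Rightarrow> 'a set \<Rightarrow> real" where
  "altitude p \<sigma> = infdist p (affine hull (\<sigma> - {p}))"

definition thickness :: "'a::euclidean_space set \<Rightarrow> real" where
  "thickness \<sigma> = (if sdim \<sigma> = 0 then 1
     else Min ((\<lambda>p. altitude p \<sigma>) ` \<sigma>) / (real (sdim \<sigma>) * longest_edge \<sigma>))"

definition good :: "real \<Rightarrow> 'a::euclidean_space set \<Rightarrow> bool" where
  "good \<Gamma>0 \<sigma> \<longleftrightarrow> (\<forall>f. f \<subseteq> \<sigma> \<and> f \<noteq> {} \<longrightarrow> \<Gamma>0 ^ sdim f \<le> thickness f)"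

definition flake :: "real \<Rightarrow> 'a::euclidean_space set \<Rightarrow> bool" where
  "flake \<Gamma>0 \<sigma> \<longleftrightarrow> \<not> good \<Gamma>0 \<sigma> \<and> (\<forall>f. f \<subset> \<sigma> \<and> f \<noteq> {} \<longrightarrow> good \<Gamma>0 f)"

definition circ_ball :: "'a::euclidean_space set \<Rightarrow> 'a \<Rightarrow> real \<Rightarrow> bool" where
  "circ_ball \<sigma> c r \<longleftrightarrow> 0 < r \<and> (\<forall>v\<in>\<sigma>. dist c v = r)"

definition circumradius :: "'a::euclidean_space set \<Rightarrow> ereal" where
  "circumradius \<sigma> = (if \<exists>c r. circ_ball \<sigma> c r
      then ereal (Inf {r. \<exists>c. circ_ball \<sigma> c r}) else \<infinity>)"

definition circumcentre :: "'a::euclidean_space set \<Rightarrow> 'a" where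
  "circumcentre \<sigma> = (THE c. circ_ball \<sigma> c (real_of_ereal (circumradius \<sigma>)))"

definition circumsphere :: "'a::euclidean_space set \<Rightarrow> 'a set" where
  "circumsphere \<sigma> = sphere (circumcentre \<sigma>) (real_of_ereal (circumradius \<sigma>)) \<inter> affine hull \<sigma>"

definition forbidden_config ::
  "'a::euclidean_space set \<Rightarrow> real \<Rightarrow> real \<Rightarrow> real \<Rightarrow> real \<Rightarrow> nat \<Rightarrow> 'a set \<Rightarrow> bool" where
  "forbidden_config P' \<mu>' \<epsilon>' \<Gamma>0 \<delta>0 k \<tau> \<longleftrightarrow>
     \<tau> \<subseteq> P' \<and> card \<tau> = k + 2 \<and> k \<le> DIM('a) \<and> flake \<Gamma>0 \<tau> \<and>
     (\<exists>p\<in>\<tau>. \<exists>C R. circ_ball (\<tau> - {p}) C R \<and> R < \<epsilon>' \<and>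
        \<bar>dist p C - R\<bar> \<le> \<delta>0 * \<mu>' * \<epsilon>')"

definition hoop :: "real \<Rightarrow> 'a::euclidean_space set \<Rightarrow> bool" where
  "hoop \<alpha>0 \<tau> \<longleftrightarrow> (\<forall>p\<in>\<tau>. circumradius (\<tau> - {p}) < \<infinity> \<and>
      infdist p (circumsphere (\<tau> - {p})) \<le> \<alpha>0 * real_of_ereal (circumradius (\<tau> - {p})))"

end

theory Submission
  imports Defs
begin

lemma aff_proj:
  fixes q :: "'a::euclidean_space"
  assumes "S \<noteq> {}"
  obtains q' where "q' \<in> affine hull S" "dist q q' = infdist q (affine hull S)"
    "\<And>a b. a \<in> affine hull S \<Longrightarrow> b \<in> affine hull S \<Longrightarrow> (q - q') \<bullet> (a - b) = 0"
proof -
  have ne: "affine hull S \<noteq> {}" using assms by simp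
  obtain q' where q': "q' \<in> affine hull S" "infdist q (affine hull S) = dist q q'"
    using infdist_attains_inf[OF closed_affine_hull ne] by metis
  have orth: "(q - q') \<bullet> (a - b) = 0" if a: "a \<in> affine hull S" and b: "b \<in> affine hull S" for a b
  proof (rule ccontr)
    assume ne0: "(q - q') \<bullet> (a - b) \<noteq> 0"
    define d where "d = a - b"
    define e where "e = q - q'"
    have dne: "d \<noteq> 0" using ne0 d_def by auto
    define s where "s = (e \<bullet> d) / (d \<bullet> d)"
    have "q' + s *\<^sub>R (a - b) \<in> affine hull S"
      by (rule mem_affine_3_minus[OF affine_affine_hull q'(1) a b])
    hence "dist q q' \<le> dist q (q' + s *\<^sub>R d)"
      using q'(2) infdist_le d_def by metis
    hence "norm e ^ 2 \<le> norm (e - s *\<^sub>R d) ^ 2"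
      by (simp add: dist_norm e_def algebra_simps)
    also have "norm (e - s *\<^sub>R d) ^ 2 = e \<bullet> e - 2 * s * (e \<bullet> d) + s * s * (d \<bullet> d)"
      by (simp add: power2_norm_eq_inner inner_diff_left inner_diff_right inner_commute algebra_simps)
    also have "\<dots> = e \<bullet> e - (e \<bullet> d)^2 / (d \<bullet> d)"
      using dne by (simp add: s_def field_simps power2_eq_square)
    finally have "(e \<bullet> d)^2 / (d \<bullet> d) \<le> 0" by (simp add: power2_norm_eq_inner)
    moreover have "(e \<bullet> d)^2 / (d \<bullet> d) > 0" using dne ne0 e_def d_def by simp
    ultimately show False by simp
  qed
  show ?thesis using that q' orth by metis
qed


lemma equi_unique:
  fixes c1 c2 :: "'a::euclidean_space"
  assumes "S \<noteq> {}" "c1 \<in> affine hull S" "c2 \<in> affine hull S"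
    "\<And>v. v \<in> S \<Longrightarrow> dist c1 v = r1" "\<And>v. v \<in> S \<Longrightarrow> dist c2 v = r2"
  shows "c1 = c2"
proof -
  define d where "d = c1 - c2"
  define K where "K = (c1 \<bullet> c1 - c2 \<bullet> c2 - r1^2 + r2^2) / 2"
  have "d \<bullet> v = K" if "v \<in> S" for v
  proof -
    have "(dist c1 v)^2 = r1^2" "(dist c2 v)^2 = r2^2" using assms that by auto
    hence "(c1 - v) \<bullet> (c1 - v) = r1^2" "(c2 - v) \<bullet> (c2 - v) = r2^2"
      by (simp_all add: dist_norm power2_norm_eq_inner)
    thus ?thesis by (simp add: d_def K_def inner_diff_left inner_diff_right inner_commute algebra_simps)
  qed
  hence "S \<subseteq> {x. d \<bullet> x = K}" by auto
  hence "affine hull S \<subseteq> {x. d \<bullet> x = K}" by (rule hull_minimal) (rule affine_hyperplane)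
  hence "d \<bullet> c1 = K" "d \<bullet> c2 = K" using assms by auto
  hence "d \<bullet> d = 0" by (simp add: d_def inner_diff_right)
  thus ?thesis by (simp add: d_def)
qed

lemma pyth_proj:
  fixes c c' v :: "'a::euclidean_space"
  assumes "c' \<in> affine hull S" "v \<in> affine hull S"
    "\<And>a b. a \<in> affine hull S \<Longrightarrow> b \<in> affine hull S \<Longrightarrow> (c - c') \<bullet> (a - b) = 0"
  shows "(dist c v)^2 = (dist c c')^2 + (dist c' v)^2"
proof -
  have o: "(c - c') \<bullet> (c' - v) = 0" using assms by auto
  have e: "c - v = (c - c') + (c' - v)" by (simp add: algebra_simps)
  have "(c - v) \<bullet> (c - v) = ((c - c') + (c' - v)) \<bullet> ((c - c') + (c' - v))"
    by (simp only: e[symmetric])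
  also have "\<dots> = (c - c') \<bullet> (c - c') + 2 * ((c - c') \<bullet> (c' - v)) + (c' - v) \<bullet> (c' - v)"
    by (simp only: inner_add_left inner_add_right inner_commute[of "c' - v" "c - c'"])
  finally have "(c - v) \<bullet> (c - v) = (c - c') \<bullet> (c - c') + (c' - v) \<bullet> (c' - v)"
    using o by simp
  thus ?thesis by (simp add: dist_norm power2_norm_eq_inner)
qed

lemma circ_char:
  fixes S :: "'a::euclidean_space set"
  assumes "v1 \<in> S" "v2 \<in> S" "v1 \<noteq> v2" "circ_ball S C r"
  obtains cs rs where "cs \<in> affine hull S" "0 < rs" "\<And>v. v \<in> S \<Longrightarrow> dist cs v = rs"
    "\<And>a b. a \<in> affine hull S \<Longrightarrow> b \<in> affine hull S \<Longrightarrow> (C - cs) \<bullet> (a - b) = 0"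
    "r^2 = (dist C cs)^2 + rs^2"
    "circumradius S = ereal rs" "circumcentre S = cs"
proof -
  have Sne: "S \<noteq> {}" using assms by auto
  have key: "\<exists>c''. c'' \<in> affine hull S \<and> (\<forall>v\<in>S. dist c'' v = sqrt (r'^2 - (dist c c'')^2))
      \<and> (\<forall>a\<in>affine hull S. \<forall>b\<in>affine hull S. (c - c'') \<bullet> (a - b) = 0)
      \<and> r'^2 = (dist c c'')^2 + (sqrt (r'^2 - (dist c c'')^2))^2
      \<and> 0 < sqrt (r'^2 - (dist c c'')^2)"
    if cb: "circ_ball S c r'" for c r'
  proof -
    obtain c'' where c'': "c'' \<in> affine hull S" "dist c c'' = infdist c (affine hull S)"
      "\<And>a b. a \<in> affine hull S \<Longrightarrow> b \<in> affine hull S \<Longrightarrow> (c - c'') \<bullet> (a - b) = 0"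
      using aff_proj[OF Sne] by metis
    have eq: "(dist c'' v)^2 = r'^2 - (dist c c'')^2" if "v \<in> S" for v
      using pyth_proj[OF c''(1) hull_inc[OF that] c''(3)] cb that
      unfolding circ_ball_def by auto
    have d: "dist c'' v = sqrt (r'^2 - (dist c c'')^2)" if "v \<in> S" for v
      using eq[OF that] by (metis real_sqrt_unique zero_le_dist)
    have pos: "0 < sqrt (r'^2 - (dist c c'')^2)"
    proof (rule ccontr)
      assume "\<not> ?thesis"
      hence "sqrt (r'^2 - (dist c c'')^2) = 0" using d[OF assms(1)] zero_le_dist[of c'' v1] by linarith
      hence "dist c'' v1 = 0" "dist c'' v2 = 0" using d assms by auto
      thus False using assms(3) by simp
    qed
    have "r'^2 = (dist c c'')^2 + (sqrt (r'^2 - (dist c c'')^2))^2"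
      using eq[OF assms(1)] d[OF assms(1)] by simp
    thus ?thesis using c'' d pos by blast
  qed
  obtain cs where cs: "cs \<in> affine hull S" "\<forall>v\<in>S. dist cs v = sqrt (r^2 - (dist C cs)^2)"
     "\<forall>a\<in>affine hull S. \<forall>b\<in>affine hull S. (C - cs) \<bullet> (a - b) = 0"
     "r^2 = (dist C cs)^2 + (sqrt (r^2 - (dist C cs)^2))^2"
     "0 < sqrt (r^2 - (dist C cs)^2)"
    using key[OF assms(4)] by blast
  define rs where "rs = sqrt (r^2 - (dist C cs)^2)"
  have allc: "r'^2 = (dist c cs)^2 + rs^2 \<and> 0 < r'" if cb: "circ_ball S c r'" for c r'
  proof -
    obtain c'' where c'': "c'' \<in> affine hull S" "\<forall>v\<in>S. dist c'' v = sqrt (r'^2 - (dist c c'')^2)"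
      "\<forall>a\<in>affine hull S. \<forall>b\<in>affine hull S. (c - c'') \<bullet> (a - b) = 0"
      "r'^2 = (dist c c'')^2 + (sqrt (r'^2 - (dist c c'')^2))^2"
      using key[OF cb] by blast
    have "c'' = cs" using equi_unique[OF Sne c''(1) cs(1)] c''(2) cs(2) by blast
    moreover have "sqrt (r'^2 - (dist c c'')^2) = rs"
      using c''(2) cs(2) assms(1) \<open>c'' = cs\<close> rs_def by auto
    ultimately show ?thesis using c''(4) cb by (simp add: circ_ball_def)
  qed
  have cbs: "circ_ball S cs rs" using cs by (simp add: circ_ball_def rs_def)
  have inf: "Inf {r. \<exists>c. circ_ball S c r} = rs"
  proof (rule cInf_eq_minimum)
    show "rs \<in> {r. \<exists>c. circ_ball S c r}" using cbs by blast
    fix x assume "x \<in> {r. \<exists>c. circ_ball S c r}"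
    then obtain c where c: "circ_ball S c x" by blast
    from allc[OF c] have "rs^2 \<le> x^2" "0 < x" by auto
    thus "rs \<le> x" using power2_le_imp_le[of rs x] by linarith
  qed
  have ex: "\<exists>c r. circ_ball S c r" using cbs by blast
  have cr: "circumradius S = ereal rs" unfolding circumradius_def using ex inf by presburger
  have cc: "circumcentre S = cs"
    unfolding circumcentre_def cr real_of_ereal.simps
  proof (rule the_equality)
    show "circ_ball S cs rs" by (rule cbs)
    fix c assume "circ_ball S c rs"
    from allc[OF this] have "(dist c cs)^2 = 0" by linarith
    hence "dist c cs = 0" by simp
    thus "c = cs" by simp
  qed
  show ?thesis
  proof (rule that[OF cs(1) _ _ _ _ cr cc])
    show "0 < rs" using cs(5) rs_def by simp
    show "\<And>v. v \<in> S \<Longrightarrow> dist cs v = rs" using cs(2) rs_def by simp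
    show "\<And>a b. a \<in> affine hull S \<Longrightarrow> b \<in> affine hull S \<Longrightarrow> (C - cs) \<bullet> (a - b) = 0" using cs(3) by blast
    show "r^2 = (dist C cs)^2 + rs^2" using cs(4) rs_def by simp
  qed
qed

lemma alt_ident:
  fixes q s :: "'a::euclidean_space"
  assumes Gne: "G \<noteq> {}"
  shows "infdist q (affine hull (insert s G)) * infdist s (affine hull G)
       \<le> infdist s (affine hull (insert q G)) * infdist q (affine hull G)"
proof -
  obtain q0 where q0: "q0 \<in> affine hull G" "dist q q0 = infdist q (affine hull G)"
      "\<And>a b. a \<in> affine hull G \<Longrightarrow> b \<in> affine hull G \<Longrightarrow> (q - q0) \<bullet> (a - b) = 0"
    using aff_proj[OF Gne] by metis
  obtain s0 where s0: "s0 \<in> affine hull G" "dist s s0 = infdist s (affine hull G)"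
      "\<And>a b. a \<in> affine hull G \<Longrightarrow> b \<in> affine hull G \<Longrightarrow> (s - s0) \<bullet> (a - b) = 0"
    using aff_proj[OF Gne] by metis
  define x where "x = s - s0"
  define y where "y = q - q0"
  define Dq where "Dq = infdist q (affine hull (insert s G))"
  define Ds where "Ds = infdist s (affine hull (insert q G))"
  have nx: "infdist s (affine hull G) = norm x" using s0(2) by (simp add: x_def dist_norm)
  have ny: "infdist q (affine hull G) = norm y" using q0(2) by (simp add: y_def dist_norm)
  have Dq0: "0 \<le> Dq" "0 \<le> Ds" by (simp_all add: Dq_def Ds_def infdist_nonneg)
  define K where "K = (x \<bullet> x) * (y \<bullet> y) - (x \<bullet> y)^2"
  have up: "(Dq * norm x)^2 \<le> K"
  proof (cases "x = 0")
    case True thus ?thesis by (simp add: K_def)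
  next
    case False
    hence xx: "x \<bullet> x > 0" by simp
    define l where "l = (x \<bullet> y) / (x \<bullet> x)"
    have "q0 + l *\<^sub>R (s - s0) \<in> affine hull (insert s G)"
      apply (rule mem_affine_3_minus[OF affine_affine_hull])
      using q0(1) s0(1) hull_mono[of G "insert s G"] hull_inc[of s "insert s G"] by auto
    hence "Dq \<le> dist q (q0 + l *\<^sub>R (s - s0))" unfolding Dq_def by (rule infdist_le)
    also have "dist q (q0 + l *\<^sub>R (s - s0)) = norm (y - l *\<^sub>R x)"
      by (simp add: dist_norm x_def y_def algebra_simps)
    finally have a: "Dq \<le> norm (y - l *\<^sub>R x)" .
    have "(norm (y - l *\<^sub>R x))^2 = y \<bullet> y - 2 * l * (x \<bullet> y) + l * l * (x \<bullet> x)"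
      by (simp add: power2_norm_eq_inner inner_diff_left inner_diff_right inner_commute algebra_simps)
    also have "\<dots> = K / (x \<bullet> x)" using xx by (simp add: l_def K_def field_simps power2_eq_square)
    finally have b: "(norm (y - l *\<^sub>R x))^2 = K / (x \<bullet> x)" .
    have "Dq^2 \<le> K / (x \<bullet> x)" using a b Dq0 by (metis power_mono)
    hence "Dq^2 * (x \<bullet> x) \<le> K" using xx by (simp add: field_simps)
    thus ?thesis by (simp add: power_mult_distrib power2_norm_eq_inner)
  qed
  have lo: "K \<le> (Ds * norm y)^2"
  proof (cases "y = 0")
    case True thus ?thesis by (simp add: K_def)
  next
    case False
    hence yy: "y \<bullet> y > 0" by simp
    define n where "n = x - ((x \<bullet> y) / (y \<bullet> y)) *\<^sub>R y"
    have ny0: "n \<bullet> y = 0" using yy by (simp add: n_def inner_diff_left)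
    have nx: "n \<bullet> x = n \<bullet> n" using ny0 by (simp add: n_def inner_diff_right inner_diff_left inner_commute)
    have ndir: "n \<bullet> (a - b) = 0" if "a \<in> affine hull G" "b \<in> affine hull G" for a b
      using s0(3)[OF that] q0(3)[OF that] by (simp add: n_def x_def y_def inner_diff_left)
    have nnK: "(n \<bullet> n) * (y \<bullet> y) = K" using yy
      by (simp add: n_def K_def inner_diff_left inner_diff_right inner_commute field_simps power2_eq_square)
    have sub: "insert q G \<subseteq> {z. n \<bullet> z = n \<bullet> q0}"
    proof
      fix z assume "z \<in> insert q G"
      then consider "z = q" | "z \<in> G" by auto
      thus "z \<in> {z. n \<bullet> z = n \<bullet> q0}"
      proof cases
        case 1 thus ?thesis using ny0 by (simp add: y_def inner_diff_right)
      next
        case 2 thus ?thesis using ndir[OF hull_inc[OF 2] q0(1)] by (simp add: inner_diff_right)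
      qed
    qed
    hence hs: "affine hull (insert q G) \<subseteq> {z. n \<bullet> z = n \<bullet> q0}"
      by (rule hull_minimal) (rule affine_hyperplane)
    have "norm n \<le> Ds"
    proof (cases "n = 0")
      case True thus ?thesis using Dq0 by simp
    next
      case nn: False
      have ne: "affine hull (insert q G) \<noteq> {}" by simp
      obtain z where z: "z \<in> affine hull (insert q G)" "Ds = dist s z"
        using infdist_attains_inf[OF closed_affine_hull ne, of s] unfolding Ds_def by metis
      have "n \<bullet> z = n \<bullet> q0" using hs z(1) by auto
      hence "n \<bullet> (s - z) = n \<bullet> x + n \<bullet> (s0 - q0)"
        by (simp add: x_def inner_diff_right)
      also have "n \<bullet> (s0 - q0) = 0" using ndir[OF s0(1) q0(1)] .
      finally have "n \<bullet> (s - z) = norm n * norm n" using nx by (simp add: norm_eq_sqrt_inner)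
      hence "norm n * norm n \<le> norm n * norm (s - z)" using norm_cauchy_schwarz[of n "s - z"] by simp
      hence "norm n \<le> norm (s - z)" using nn by simp
      thus ?thesis using z(2) by (simp add: dist_norm)
    qed
    hence "(norm n)^2 \<le> Ds^2" by (simp add: power_mono)
    hence "(norm n)^2 * (y \<bullet> y) \<le> Ds^2 * (y \<bullet> y)" using yy by (simp add: mult_right_mono)
    moreover have "(Ds * norm y)^2 = Ds^2 * (y \<bullet> y)"
      by (simp add: power_mult_distrib power2_norm_eq_inner)
    moreover have "(norm n)^2 = n \<bullet> n" by (simp add: power2_norm_eq_inner)
    ultimately show ?thesis using nnK by simp
  qed
  have "(Dq * norm x)^2 \<le> (Ds * norm y)^2" using up lo by linarith
  moreover have "0 \<le> Ds * norm y" using Dq0 by simp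
  ultimately have "Dq * norm x \<le> Ds * norm y" by (rule power2_le_imp_le)
  thus ?thesis by (simp only: nx ny Dq_def[symmetric] Ds_def[symmetric])
qed
lemma diam_ge:
  fixes S :: "'a::euclidean_space set"
  assumes "finite S" "a \<in> S" "b \<in> S" shows "dist a b \<le> diameter S"
  using diameter_bounded_bound[OF finite_imp_bounded[OF assms(1)] assms(2,3)] .

lemma good_face_alt:
  fixes \<sigma> :: "'a::euclidean_space set"
  assumes "good \<Gamma> \<sigma>" "finite \<sigma>" "card \<sigma> = k + 1" "1 \<le> k" "v \<in> \<sigma>" "0 < \<Gamma>"
  shows "real k * diameter \<sigma> * \<Gamma>^k \<le> altitude v \<sigma>" "real k * \<Gamma>^k \<le> 1"
proof -
  have ck: "card (\<sigma> - {v}) = k" using assms by simp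
  hence "\<sigma> - {v} \<noteq> {}" using assms(4) by (metis card.empty not_one_le_zero)
  then obtain w where w: "w \<in> \<sigma>" "w \<noteq> v" by auto
  have dpos: "0 < diameter \<sigma>" using diam_ge[OF assms(2) assms(5) w(1)] w(2)
    by (metis dist_pos_lt order_less_le_trans)
  have sd: "sdim \<sigma> = k" using assms(3) by (simp add: sdim_def)
  have ne: "\<sigma> \<noteq> {}" using assms(5) by auto
  have "\<Gamma>^k \<le> thickness \<sigma>" using assms(1) ne sd unfolding good_def by auto
  also have "thickness \<sigma> = Min ((\<lambda>p. altitude p \<sigma>) ` \<sigma>) / (real k * diameter \<sigma>)"
    using sd assms(4) by (simp add: thickness_def longest_edge_def)
  finally have "\<Gamma>^k * (real k * diameter \<sigma>) \<le> Min ((\<lambda>p. altitude p \<sigma>) ` \<sigma>)"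
    using dpos assms(4) by (simp add: pos_le_divide_eq)
  also have "Min ((\<lambda>p. altitude p \<sigma>) ` \<sigma>) \<le> altitude v \<sigma>"
    using assms(2,5) by (intro Min_le) auto
  finally have A: "\<Gamma>^k * (real k * diameter \<sigma>) \<le> altitude v \<sigma>" .
  thus "real k * diameter \<sigma> * \<Gamma>^k \<le> altitude v \<sigma>" by (simp add: algebra_simps)
  have "altitude v \<sigma> \<le> dist v w" unfolding altitude_def
    using w by (intro infdist_le hull_inc) auto
  also have "\<dots> \<le> diameter \<sigma>" using diam_ge[OF assms(2) assms(5) w(1)] .
  finally have "\<Gamma>^k * real k * diameter \<sigma> \<le> 1 * diameter \<sigma>" using A by (simp add: algebra_simps)
  thus "real k * \<Gamma>^k \<le> 1" using dpos by (simp add: mult_le_cancel_right algebra_simps)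
qed

lemma flake_thin:
  fixes \<tau> :: "'a::euclidean_space set"
  assumes "flake \<Gamma> \<tau>" "finite \<tau>" "card \<tau> = k + 2" "0 < diameter \<tau>"
  obtains s where "s \<in> \<tau>" "altitude s \<tau> < real (k+1) * diameter \<tau> * \<Gamma>^(k+1)"
proof -
  from assms(1) obtain f where f: "f \<subseteq> \<tau>" "f \<noteq> {}" "\<not> \<Gamma>^sdim f \<le> thickness f"
    unfolding flake_def good_def by blast
  have "f = \<tau>"
  proof (rule ccontr)
    assume "f \<noteq> \<tau>"
    hence "good \<Gamma> f" using assms(1) f unfolding flake_def by blast
    thus False using f unfolding good_def by blast
  qed
  have sd: "sdim \<tau> = k + 1" using assms(3) by (simp add: sdim_def)
  have "thickness \<tau> = Min ((\<lambda>p. altitude p \<tau>) ` \<tau>) / (real (k+1) * diameter \<tau>)"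
    using sd by (simp add: thickness_def longest_edge_def)
  hence "Min ((\<lambda>p. altitude p \<tau>) ` \<tau>) / (real (k+1) * diameter \<tau>) < \<Gamma>^(k+1)"
    using f \<open>f = \<tau>\<close> sd by simp
  hence lt: "Min ((\<lambda>p. altitude p \<tau>) ` \<tau>) < \<Gamma>^(k+1) * (real (k+1) * diameter \<tau>)"
    using assms(4) by (simp add: divide_less_eq)
  have "Min ((\<lambda>p. altitude p \<tau>) ` \<tau>) \<in> (\<lambda>p. altitude p \<tau>) ` \<tau>"
    using assms(2) f \<open>f = \<tau>\<close> by (intro Min_in) auto
  then obtain s where "s \<in> \<tau>" "altitude s \<tau> = Min ((\<lambda>p. altitude p \<tau>) ` \<tau>)" by auto
  thus ?thesis using that lt by (simp add: algebra_simps)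
qed

lemma k_pos:
  fixes \<tau> :: "'a::euclidean_space set"
  assumes "flake \<Gamma> \<tau>" "finite \<tau>" "card \<tau> = k + 2" "\<Gamma> \<le> 1"
  shows "1 \<le> k"
proof (rule ccontr)
  assume "\<not> 1 \<le> k" hence k0: "k = 0" by simp
  hence "card \<tau> = 2" using assms(3) by simp
  then obtain a b where ab: "\<tau> = {a, b}" "a \<noteq> b" unfolding card_2_iff by blast
  have good: "good \<Gamma> \<tau>" unfolding good_def
  proof (intro allI impI)
    fix f assume f: "f \<subseteq> \<tau> \<and> f \<noteq> {}"
    show "\<Gamma>^sdim f \<le> thickness f"
    proof (cases "f = \<tau>")
      case False
      hence "f = {a} \<or> f = {b}" using f ab by blast
      hence "card f = 1" by auto
      hence "sdim f = 0" by (simp add: sdim_def)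
      thus ?thesis by (simp add: thickness_def)
    next
      case True
      have sd: "sdim f = 1" using True ab by (simp add: sdim_def)
      have aa: "altitude a \<tau> = dist a b" "altitude b \<tau> = dist a b"
        using ab by (auto simp: altitude_def insert_Diff_if dist_commute)
      have "diameter \<tau> \<le> dist a b" using ab
        by (intro diameter_le) (auto simp: dist_norm[symmetric] dist_commute)
      moreover have "dist a b \<le> diameter \<tau>" using diam_ge[OF assms(2)] ab by auto
      ultimately have dd: "diameter \<tau> = dist a b" by simp
      have "(\<lambda>p. altitude p \<tau>) ` \<tau> = {dist a b}" using aa ab by auto
      hence "thickness \<tau> = 1" using sd True dd ab by (simp add: thickness_def longest_edge_def)
      thus ?thesis using True sd assms(4) by simp
    qed
  qed
  thus False using assms(1) unfolding flake_def by blast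
qed

lemma inner_sq_diff:
  fixes a b :: "'a::real_inner"
  shows "(a - b) \<bullet> (a - b) = a \<bullet> a - 2 * (a \<bullet> b) + b \<bullet> b"
  by (simp add: inner_diff_left inner_diff_right inner_commute)

lemma main_bound:
  fixes P' \<tau> :: "'a::euclidean_space set" and mu e G d :: real and k :: nat
  assumes net: "is_net mu e P'" and G0: "0 < G" "G \<le> 1" and d0: "0 \<le> d"
    and fc: "forbidden_config P' mu e G d k \<tau>" and dsmall: "d \<le> mu^2 * G^k / 6"
    and qin: "q \<in> \<tau>"
  shows "\<exists>rs>0. circumradius (\<tau> - {q}) = ereal rs \<and>
     infdist q (circumsphere (\<tau> - {q})) \<le> (84 / mu^3 * (d / G^k) + 216 / mu^3 * G) * rs \<and>
     rs < (1 + 3 * d / (mu * G^k)) * e"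
proof -
  have finP: "finite P'" and e0: "0 < e" and mu0: "0 < mu" and mu1: "mu \<le> 1"
    and sep: "separated (mu * e) P'" using net by (auto simp: is_net_def)
  have sub: "\<tau> \<subseteq> P'" and card: "card \<tau> = k + 2" and fl: "flake G \<tau>"
    using fc by (auto simp: forbidden_config_def)
  obtain p C R where p: "p \<in> \<tau>" and cb: "circ_ball (\<tau> - {p}) C R" and Re: "R < e"
    and pC: "\<bar>dist p C - R\<bar> \<le> d * mu * e"
    using fc unfolding forbidden_config_def by blast
  have fin: "finite \<tau>" using finP sub by (rule finite_subset[rotated])
  have sepv: "mu * e \<le> dist v w" if "v \<in> \<tau>" "w \<in> \<tau>" "v \<noteq> w" for v w
    using sep sub that unfolding separated_def by blast
  have k1: "1 \<le> k" using k_pos[OF fl fin card G0(2)] .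
  have Gk0: "0 < G^k" using G0 by simp
  have Gk1: "G^k \<le> 1" using G0 by (simp add: power_le_one)
  have mu2: "mu^2 \<le> 1" using mu0 mu1 by (simp add: power_le_one)
  have "mu^2 * G^k \<le> 1 * G^k" using mu2 Gk0 by (intro mult_right_mono) auto
  hence dGk: "d \<le> G^k / 6" using dsmall by linarith
  have dG: "d / G^k \<le> 1/6" using dGk Gk0 by (simp add: divide_le_eq)
  have d16: "d \<le> 1/6" using dGk Gk1 by linarith
  define \<beta> where "\<beta> = d * mu * e"
  have b0: "0 \<le> \<beta>" unfolding \<beta>_def using d0 mu0 e0 by (intro mult_nonneg_nonneg) auto
  have be: "\<beta> \<le> e / 6"
  proof -
    have "d * mu \<le> d * 1" using mu1 d0 by (intro mult_left_mono) auto
    hence "d * mu \<le> 1/6" using d16 by linarith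
    hence "d * mu * e \<le> 1/6 * e" using e0 by (intro mult_right_mono) auto
    thus ?thesis by (simp add: \<beta>_def)
  qed
  have R0: "0 < R" using cb by (simp add: circ_ball_def)
  have Cv: "dist C v = R" if "v \<in> \<tau>" "v \<noteq> p" for v using cb that by (simp add: circ_ball_def)
  have pC2: "dist p C \<le> R + \<beta>" using pC by (simp add: \<beta>_def)
  define L where "L = diameter \<tau>"
  have distL: "dist v w \<le> L" if "v \<in> \<tau>" "w \<in> \<tau>" for v w
    unfolding L_def using diam_ge[OF fin that] .
  have L2: "L \<le> 2 * R + \<beta>"
    unfolding L_def
  proof (rule diameter_le)
    show "\<tau> \<noteq> {} \<or> 0 \<le> 2 * R + \<beta>" using p by auto
    fix v w assume vw: "v \<in> \<tau>" "w \<in> \<tau>"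
    have "dist v w \<le> 2 * R + \<beta>"
    proof (cases "v = p")
      case True
      show ?thesis
      proof (cases "w = p")
        case True thus ?thesis using \<open>v = p\<close> R0 b0 by simp
      next
        case False
        have "dist v w \<le> dist p C + dist C w" using True dist_triangle by metis
        thus ?thesis using pC2 Cv[OF vw(2) False] by simp
      qed
    next
      case False
      show ?thesis
      proof (cases "w = p")
        case True
        have "dist v w \<le> dist v C + dist C p" using True dist_triangle by metis
        thus ?thesis using pC2 Cv[OF vw(1) False] by (simp add: dist_commute)
      next
        case wF: False
        have "dist v w \<le> dist v C + dist C w" using dist_triangle by metis
        thus ?thesis using Cv[OF vw(1) False] Cv[OF vw(2) wF] b0 by (simp add: dist_commute)
      qed
    qed
    thus "norm (v - w) \<le> 2 * R + \<beta>" by (simp add: dist_norm)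
  qed
  have Le: "L \<le> 13 / 6 * e" using L2 Re be by linarith
  have twov: "\<exists>w\<in>\<tau>. w \<noteq> v" if "v \<in> \<tau>" for v
  proof -
    have "card (\<tau> - {v}) = k + 1" using card that fin by simp
    hence "\<tau> - {v} \<noteq> {}" by (metis add_is_0 card.empty zero_neq_one)
    thus ?thesis by auto
  qed
  have Lge: "mu * e \<le> L"
  proof -
    obtain w where "w \<in> \<tau>" "w \<noteq> p" using twov[OF p] by blast
    hence "mu * e \<le> dist p w" "dist p w \<le> L" using sepv[OF p] distL[OF p] by auto
    thus ?thesis by linarith
  qed
  have L0: "0 < L" using Lge mu0 e0 by (smt (verit) mult_pos_pos)
  have face_good: "good G (\<tau> - {v})" if vin: "v \<in> \<tau>" for v
  proof -
    obtain w where "w \<in> \<tau>" "w \<noteq> v" using twov[OF vin] by blast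
    hence "\<tau> - {v} \<subset> \<tau>" "\<tau> - {v} \<noteq> {}" using vin by auto
    thus ?thesis using fl unfolding flake_def by blast
  qed
  have face_card: "card (\<tau> - {v}) = k + 1" if "v \<in> \<tau>" for v using card that fin by simp
  have face_diam: "mu * e \<le> diameter (\<tau> - {v})" if vin: "v \<in> \<tau>" for v
  proof -
    obtain a where a: "a \<in> \<tau>" "a \<noteq> v" using twov[OF vin] by blast
    have "card (\<tau> - {v} - {a}) = k" using face_card[OF vin] a fin by simp
    hence "\<tau> - {v} - {a} \<noteq> {}" using k1 by (metis card.empty not_one_le_zero)
    then obtain b where b: "b \<in> \<tau>" "b \<noteq> v" "b \<noteq> a" by blast
    have "mu * e \<le> dist a b" using sepv a b by auto
    moreover have "dist a b \<le> diameter (\<tau> - {v})" using diam_ge[of "\<tau> - {v}" a b] fin a b by simp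
    ultimately show ?thesis by linarith
  qed
  have face_alt: "real k * (mu * e) * G^k \<le> altitude w (\<tau> - {v})" if "v \<in> \<tau>" "w \<in> \<tau> - {v}" for v w
  proof -
    have "real k * diameter (\<tau> - {v}) * G^k \<le> altitude w (\<tau> - {v})"
      using good_face_alt(1)[OF face_good[OF that(1)] _ face_card[OF that(1)] k1 that(2) G0(1)] fin by simp
    moreover have "real k * (mu * e) * G^k \<le> real k * diameter (\<tau> - {v}) * G^k"
      using face_diam[OF that(1)] Gk0 by (intro mult_right_mono mult_left_mono) auto
    ultimately show ?thesis by linarith
  qed
  have kG: "real k * G^k \<le> 1"
  proof -
    obtain w where "w \<in> \<tau>" "w \<noteq> p" using twov[OF p] by blast
    thus ?thesis using good_face_alt(2)[OF face_good[OF p] _ face_card[OF p] k1 _ G0(1), of w] fin by simp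
  qed
  obtain s where s: "s \<in> \<tau>" "altitude s \<tau> < real (k+1) * L * G^(k+1)"
    using flake_thin[OF fl fin card] L0 unfolding L_def by metis
  have kk: "real (k+1) \<le> 2 * real k" using k1 by simp
  have hb: "altitude v \<tau> \<le> 2 * L^2 * G / (mu * e)" if vin: "v \<in> \<tau>" for v
  proof (cases "v = s")
    case True
    have "real (k+1) * G^k = real k * G^k + G^k" by (simp add: algebra_simps)
    hence h2: "real (k+1) * G^k \<le> 2" using kG Gk1 by linarith
    have "real (k+1) * L * G^(k+1) = (L * G) * (real (k+1) * G^k)" by (simp add: algebra_simps)
    also have "\<dots> \<le> (L * G) * 2" using h2 L0 G0 by (intro mult_left_mono) auto
    finally have "real (k+1) * L * G^(k+1) \<le> 2 * L * G" by simp
    also have "2 * L * G \<le> 2 * L^2 * G / (mu * e)"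
    proof -
      have "2 * L * G * (mu * e) \<le> 2 * L * G * L" using Lge L0 G0 by (intro mult_left_mono) auto
      thus ?thesis using mu0 e0 by (simp add: le_divide_eq power2_eq_square algebra_simps)
    qed
    finally have "real (k + 1) * L * G ^ (k + 1) \<le> 2 * L\<^sup>2 * G / (mu * e)" .
    thus ?thesis using True s(2) by simp
  next
    case False
    define F where "F = \<tau> - {v, s}"
    have cF: "card F = k" using card fin vin s(1) False by (simp add: F_def card_Diff_subset)
    hence Fne: "F \<noteq> {}" using k1 by (metis card.empty not_one_le_zero)
    have e1: "\<tau> - {v} = insert s F" using s(1) False by (auto simp: F_def)
    have e2: "\<tau> - {s} = insert v F" using vin False by (auto simp: F_def)
    have e3: "\<tau> - {v} - {s} = F" by (auto simp: F_def)
    have id: "altitude v \<tau> * infdist s (affine hull F) \<le> altitude s \<tau> * infdist v (affine hull F)"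
      using alt_ident[OF Fne, of v s] unfolding altitude_def e1 e2 .
    have X: "real k * (mu * e) * G^k \<le> infdist s (affine hull F)"
      using face_alt[OF vin, of s] s(1) False e3 by (simp add: altitude_def)
    obtain g where g: "g \<in> F" using Fne by blast
    have Y: "infdist v (affine hull F) \<le> L"
    proof -
      have "infdist v (affine hull F) \<le> dist v g" using g by (intro infdist_le hull_inc)
      also have "\<dots> \<le> L" using distL vin g by (auto simp: F_def)
      finally show ?thesis .
    qed
    have a0: "0 \<le> altitude v \<tau>" "0 \<le> altitude s \<tau>" by (simp_all add: altitude_def infdist_nonneg)
    have P0: "0 < real k * (mu * e) * G^k" using k1 mu0 e0 Gk0 by simp
    have "altitude v \<tau> * (real k * (mu * e) * G^k) \<le> altitude v \<tau> * infdist s (affine hull F)"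
      using X a0 by (intro mult_left_mono) auto
    also have "\<dots> \<le> altitude s \<tau> * infdist v (affine hull F)" by (rule id)
    also have "\<dots> \<le> altitude s \<tau> * L" using Y a0 by (intro mult_left_mono) auto
    also have "\<dots> \<le> real (k+1) * L * G^(k+1) * L" using s(2) L0 by (intro mult_right_mono) auto
    also have "\<dots> \<le> 2 * real k * L * G^(k+1) * L" using kk L0 G0 by (intro mult_right_mono) auto
    also have "\<dots> = (2 * L^2 * G / (mu * e)) * (real k * (mu * e) * G^k)"
      using mu0 e0 by (simp add: power2_eq_square field_simps)
    finally have "altitude v \<tau> * (real k * (mu * e) * G^k) \<le> (2 * L^2 * G / (mu * e)) * (real k * (mu * e) * G^k)" .
    thus ?thesis using P0 by (rule mult_right_le_imp_le)
  qed
  have pC3: "\<bar>(dist C p)^2 - R^2\<bar> \<le> 13/6 * d * mu * e^2"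
  proof -
    have "(dist C p)^2 - R^2 = (dist p C - R) * (dist p C + R)"
      by (simp add: dist_commute power2_eq_square algebra_simps)
    hence eq: "\<bar>(dist C p)^2 - R^2\<bar> = \<bar>dist p C - R\<bar> * (dist p C + R)"
      using R0 by (simp add: abs_mult)
    have s1: "dist p C + R \<le> 13/6 * e" using pC2 Re be by linarith
    have s2: "\<bar>dist p C - R\<bar> \<le> \<beta>" using pC by (simp add: \<beta>_def)
    have "\<bar>dist p C - R\<bar> * (dist p C + R) \<le> \<beta> * (13/6 * e)"
      using s1 s2 R0 b0 by (intro mult_mono) auto
    thus ?thesis using eq by (simp add: \<beta>_def power2_eq_square algebra_simps)
  qed
  have five: "13/6 * d * mu * e^2 \<le> 5 * d * e^2 / G^k"
  proof -
    have "13/6 * d * mu * e^2 \<le> 13/6 * d * 1 * e^2" using mu1 d0 by (intro mult_right_mono mult_left_mono) auto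
    also have "\<dots> \<le> 5 * d * e^2" using d0 by simp
    also have "\<dots> \<le> 5 * d * e^2 / G^k" using d0 Gk0 Gk1 by (simp add: le_divide_eq mult_left_le)
    finally show ?thesis .
  qed
  have three: "0 \<le> 3 * d / (mu * G^k)" using d0 mu0 Gk0 by simp
  have "0 \<le> 3 * d / (mu * G^k) * e" using three e0 by (intro mult_nonneg_nonneg) auto
  hence ebound: "e \<le> (1 + 3 * d / (mu * G^k)) * e" by (simp add: distrib_right)
  obtain Cq r where cbq: "circ_ball (\<tau> - {q}) Cq r" and rb1: "r < (1 + 3 * d / (mu * G^k)) * e"
    and rb2: "r \<le> 85/72 * e" and Eq: "\<bar>(dist Cq q)^2 - r^2\<bar> \<le> 5 * d * e^2 / G^k"
  proof (cases "q = p")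
    case True
    show ?thesis
    proof (rule that[of C R])
      show "circ_ball (\<tau> - {q}) C R" using cb True by simp
      show "R < (1 + 3 * d / (mu * G^k)) * e" using Re ebound by linarith
      show "R \<le> 85/72 * e" using Re e0 by simp
      show "\<bar>(dist C q)^2 - R^2\<bar> \<le> 5 * d * e^2 / G^k" using pC3 five True by simp
    qed
  next
    case qp: False
    define F where "F = \<tau> - {p, q}"
    have cF: "card F = k" using card fin qin p qp by (simp add: F_def card_Diff_subset)
    hence Fne: "F \<noteq> {}" using k1 by (metis card.empty not_one_le_zero)
    obtain v0 where v0: "v0 \<in> F" using Fne by blast
    have v0t: "v0 \<in> \<tau>" "v0 \<noteq> p" "v0 \<noteq> q" using v0 by (auto simp: F_def)
    have eF: "\<tau> - {q} - {p} = F" by (auto simp: F_def)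
    obtain p' where p': "p' \<in> affine hull F" "dist p p' = infdist p (affine hull F)"
      "\<And>a b. a \<in> affine hull F \<Longrightarrow> b \<in> affine hull F \<Longrightarrow> (p - p') \<bullet> (a - b) = 0"
      using aff_proj[OF Fne] by metis
    define D where "D = dist p p'"
    have DD: "real k * (mu * e) * G^k \<le> D"
      using face_alt[OF qin, of p] p qp eF p'(2) by (simp add: altitude_def D_def)
    have Dlow: "mu * e * G^k \<le> D"
    proof -
      have "mu * e * G^k * 1 \<le> mu * e * G^k * real k" using k1 mu0 e0 Gk0 by (intro mult_left_mono) auto
      thus ?thesis using DD by (simp add: algebra_simps)
    qed
    have D0: "0 < D" using Dlow mu0 e0 Gk0 by (smt (verit) mult_pos_pos)
    define u where "u = (1 / D) *\<^sub>R (p - p')"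
    have nD: "norm (p - p') = D" by (simp add: D_def dist_norm)
    have nu: "norm u = 1" using D0 nD by (simp add: u_def)
    have uu: "u \<bullet> u = 1" using nu power2_norm_eq_inner[of u] by simp
    have "(p - p') \<bullet> (p - p') = D^2" using nD power2_norm_eq_inner[of "p - p'"] by simp
    hence up: "u \<bullet> (p - p') = D" using D0 by (simp add: u_def power2_eq_square)
    have uo: "u \<bullet> (a - b) = 0" if "a \<in> affine hull F" "b \<in> affine hull F" for a b
      using p'(3)[OF that] by (simp add: u_def)
    define t where "t = ((dist C p)^2 - R^2) / (2 * D)"
    define Cq where "Cq = C + t *\<^sub>R u"
    define a0 where "a0 = u \<bullet> (C - p')"
    have dCq: "(dist Cq x)^2 = (dist C x)^2 + 2 * t * (u \<bullet> (C - x)) + t^2" for x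
    proof -
      have "Cq - x = (C - x) + t *\<^sub>R u" by (simp add: Cq_def algebra_simps)
      hence "(Cq - x) \<bullet> (Cq - x) = (C - x) \<bullet> (C - x) + 2 * t * (u \<bullet> (C - x)) + t^2 * (u \<bullet> u)"
        by (simp add: inner_add_left inner_add_right inner_commute power2_eq_square algebra_simps)
      thus ?thesis using uu by (simp add: dist_norm power2_norm_eq_inner)
    qed
    have ua: "u \<bullet> (C - v) = a0" if "v \<in> F" for v
    proof -
      have "u \<bullet> (p' - v) = 0" using uo[OF p'(1) hull_inc[OF that]] .
      thus ?thesis by (simp add: a0_def inner_diff_right)
    qed
    define r2 where "r2 = R^2 + 2 * t * a0 + t^2"
    have dF: "(dist Cq v)^2 = r2" if "v \<in> F" for v
      using dCq[of v] ua[OF that] Cv[of v] that by (simp add: r2_def F_def)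
    have dP: "(dist Cq p)^2 = r2"
    proof -
      have "u \<bullet> (C - p) = a0 - D" using up by (simp add: a0_def inner_diff_right)
      hence h1: "(dist Cq p)^2 = (dist C p)^2 + 2 * t * (a0 - D) + t^2" using dCq[of p] by simp
      have h2: "2 * t * D = (dist C p)^2 - R^2" using D0 by (simp add: t_def)
      have h3: "2 * t * (a0 - D) = 2 * t * a0 - 2 * t * D" by (simp add: algebra_simps)
      show ?thesis using h1 h2 h3 unfolding r2_def by linarith
    qed
    define r where "r = dist Cq v0"
    have r2r: "r2 = r^2" using dF[OF v0] by (simp add: r_def)
    have allr: "dist Cq v = r" if "v \<in> \<tau> - {q}" for v
    proof -
      have "(dist Cq v)^2 = r^2"
        using that dF dP r2r by (cases "v = p") (auto simp: F_def)
      thus ?thesis using zero_le_dist[of Cq v] zero_le_dist[of Cq v0] unfolding r_def by (metis power2_eq_iff_nonneg)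
    qed
    have r0: "0 < r"
    proof (rule ccontr)
      assume "\<not> 0 < r"
      hence "r = 0" using zero_le_dist r_def by (metis less_eq_real_def)
      hence "Cq = v0" "Cq = p" using allr[of v0] allr[of p] v0t p qp by auto
      thus False using v0t by simp
    qed
    have cbq: "circ_ball (\<tau> - {q}) Cq r" using r0 allr by (simp add: circ_ball_def)
    have tb: "\<bar>t\<bar> \<le> 13/12 * (d / G^k) * e"
    proof -
      have "\<bar>t\<bar> = \<bar>(dist C p)^2 - R^2\<bar> / (2 * D)" using D0 by (simp add: t_def abs_divide)
      also have "\<dots> \<le> (13/6 * d * mu * e^2) / (2 * (mu * e * G^k))"
        using pC3 Dlow D0 mu0 e0 Gk0 d0 by (intro frac_le) auto
      also have "\<dots> = 13/12 * (d / G^k) * e" using mu0 e0 Gk0 by (simp add: power2_eq_square field_simps)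
      finally show ?thesis .
    qed
    have a0b: "\<bar>a0\<bar> \<le> R"
    proof -
      have "\<bar>a0\<bar> = \<bar>u \<bullet> (C - v0)\<bar>" using ua[OF v0] by simp
      also have "\<dots> \<le> norm u * norm (C - v0)" by (rule Cauchy_Schwarz_ineq2)
      also have "\<dots> = R" using nu Cv[OF v0t(1,2)] by (simp add: dist_norm)
      finally show ?thesis .
    qed
    have rR: "r \<le> R + \<bar>t\<bar>"
    proof -
      have "2 * t * a0 \<le> 2 * \<bar>t\<bar> * R"
      proof -
        have "2 * t * a0 \<le> \<bar>2 * t * a0\<bar>" by simp
        also have "\<dots> = 2 * \<bar>t\<bar> * \<bar>a0\<bar>" by (simp add: abs_mult)
        also have "\<dots> \<le> 2 * \<bar>t\<bar> * R" using a0b by (intro mult_left_mono) auto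
        finally show ?thesis .
      qed
      moreover have "(R + \<bar>t\<bar>)^2 = R^2 + 2 * \<bar>t\<bar> * R + t^2"
        by (simp add: power2_eq_square algebra_simps)
      ultimately have "r^2 \<le> (R + \<bar>t\<bar>)^2" using r2r unfolding r2_def by linarith
      moreover have "0 \<le> R + \<bar>t\<bar>" using R0 by simp
      ultimately show ?thesis by (rule power2_le_imp_le)
    qed
    have T1: "13/12 * (d / G^k) * e \<le> 13/72 * e"
    proof -
      have "13/12 * (d / G^k) \<le> 13/72" using dG by linarith
      thus ?thesis using e0 by (intro mult_right_mono) auto
    qed
    have T2: "13/12 * (d / G^k) * e \<le> 3 * d / (mu * G^k) * e"
    proof -
      have x0: "0 \<le> d / G^k" using d0 Gk0 by simp
      have "1 \<le> 1 / mu" using mu0 mu1 by (simp add: le_divide_eq)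
      hence "(d / G^k) * 1 \<le> (d / G^k) * (1 / mu)" using x0 by (intro mult_left_mono) auto
      hence "13/12 * (d / G^k) \<le> 3 * ((d / G^k) * (1 / mu))" using x0 by linarith
      also have "\<dots> = 3 * d / (mu * G^k)" by (simp add: field_simps)
      finally show ?thesis using e0 by (intro mult_right_mono) auto
    qed
    show ?thesis
    proof (rule that[OF cbq])
      have "(1 + 3 * d / (mu * G^k)) * e = e + 3 * d / (mu * G^k) * e" by (simp add: distrib_right)
      thus "r < (1 + 3 * d / (mu * G^k)) * e" using rR tb T2 Re by linarith
      show "r \<le> 85/72 * e" using rR tb T1 Re by linarith
      have "(dist Cq q)^2 - r^2 = 2 * t * (u \<bullet> (v0 - q))"
      proof -
        have "u \<bullet> (C - q) = a0 + u \<bullet> (v0 - q)" using ua[OF v0] by (simp add: inner_diff_right)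
        thus ?thesis using dCq[of q] Cv[OF qin qp] r2r by (simp add: r2_def algebra_simps)
      qed
      hence "\<bar>(dist Cq q)^2 - r^2\<bar> = 2 * \<bar>t\<bar> * \<bar>u \<bullet> (v0 - q)\<bar>" by (simp add: abs_mult)
      also have "\<dots> \<le> 2 * (13/12 * (d / G^k) * e) * (13/6 * e)"
      proof (intro mult_mono)
        have "\<bar>u \<bullet> (v0 - q)\<bar> \<le> norm u * norm (v0 - q)" by (rule Cauchy_Schwarz_ineq2)
        also have "\<dots> \<le> L" using nu distL[OF v0t(1) qin] by (simp add: dist_norm)
        finally show "\<bar>u \<bullet> (v0 - q)\<bar> \<le> 13/6 * e" using Le by linarith
      qed (use tb d0 Gk0 e0 in auto)
      also have "\<dots> \<le> 5 * d * e^2 / G^k" using d0 Gk0 e0 by (simp add: power2_eq_square field_simps)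
      finally show "\<bar>(dist Cq q)^2 - r^2\<bar> \<le> 5 * d * e^2 / G^k" .
    qed
  qed
  obtain v1 where v1: "v1 \<in> \<tau>" "v1 \<noteq> q" using twov[OF qin] by blast
  have "card (\<tau> - {q} - {v1}) = k" using face_card[OF qin] v1 fin by simp
  hence "\<tau> - {q} - {v1} \<noteq> {}" using k1 by (metis card.empty not_one_le_zero)
  then obtain v2 where v2: "v2 \<in> \<tau>" "v2 \<noteq> q" "v2 \<noteq> v1" by blast
  have v1': "v1 \<in> \<tau> - {q}" and v2': "v2 \<in> \<tau> - {q}" using v1 v2 by auto
  obtain cs rs where cs: "cs \<in> affine hull (\<tau> - {q})" "0 < rs"
    "\<And>v. v \<in> \<tau> - {q} \<Longrightarrow> dist cs v = rs"
    "\<And>a b. a \<in> affine hull (\<tau> - {q}) \<Longrightarrow> b \<in> affine hull (\<tau> - {q}) \<Longrightarrow> (Cq - cs) \<bullet> (a - b) = 0"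
    "r^2 = (dist Cq cs)^2 + rs^2"
    "circumradius (\<tau> - {q}) = ereal rs" "circumcentre (\<tau> - {q}) = cs"
    using circ_char[OF v1' v2' v2(3)[symmetric] cbq] by blast
  have r0: "0 < r" using cbq by (simp add: circ_ball_def)
  have rsr: "rs \<le> r"
  proof -
    have "rs^2 \<le> r^2" using cs(5) zero_le_power2[of "dist Cq cs"] by linarith
    moreover have "0 \<le> r" using r0 by simp
    ultimately show ?thesis by (rule power2_le_imp_le)
  qed
  have rslow: "mu * e / 2 \<le> rs"
  proof -
    have "mu * e \<le> dist v1 v2" using sepv v1 v2 by auto
    also have "\<dots> \<le> dist v1 cs + dist cs v2" by (rule dist_triangle)
    also have "\<dots> = 2 * rs" using cs(3)[of v1] cs(3)[of v2] v1 v2 by (simp add: dist_commute)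
    finally show ?thesis by simp
  qed
  have ne: "\<tau> - {q} \<noteq> {}" using v1 by auto
  obtain q' where q': "q' \<in> affine hull (\<tau> - {q})" "dist q q' = infdist q (affine hull (\<tau> - {q}))"
      "\<And>a b. a \<in> affine hull (\<tau> - {q}) \<Longrightarrow> b \<in> affine hull (\<tau> - {q}) \<Longrightarrow> (q - q') \<bullet> (a - b) = 0"
    using aff_proj[OF ne] by metis
  define h where "h = dist q q'"
  have hal: "h = altitude q \<tau>" using q'(2) by (simp add: h_def altitude_def)
  have h0: "0 \<le> h" by (simp add: h_def)
  have hL: "h \<le> L"
  proof -
    have "h \<le> dist q v1" unfolding hal altitude_def using v1 by (intro infdist_le hull_inc) auto
    also have "\<dots> \<le> L" using distL qin v1 by auto
    finally show ?thesis .
  qed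
  have hG: "h \<le> 169/18 * G * e / mu"
  proof -
    have "L^2 \<le> (13/6 * e)^2" using Le L0 by (intro power_mono) auto
    hence "2 * L^2 * G \<le> 2 * (13/6 * e)^2 * G" using G0 by (intro mult_right_mono) auto
    hence "2 * L^2 * G / (mu * e) \<le> 2 * (13/6 * e)^2 * G / (mu * e)" using mu0 e0 by (intro divide_right_mono) auto
    also have "\<dots> = 169/18 * G * e / mu" using e0 by (simp add: power2_eq_square field_simps)
    finally show ?thesis using hb[OF qin] hal by linarith
  qed
  define w where "w = Cq - cs"
  define dd where "dd = q - q'"
  define ee where "ee = q' - cs"
  have we: "w \<bullet> ee = 0" using cs(4)[OF q'(1) cs(1)] by (simp add: w_def ee_def)
  have de: "dd \<bullet> ee = 0" using q'(3)[OF q'(1) cs(1)] by (simp add: dd_def ee_def)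
  have nd: "norm dd = h" by (simp add: dd_def h_def dist_norm)
  have nw: "norm w \<le> r"
  proof -
    have "dist Cq cs = norm w" by (simp add: w_def dist_norm)
    hence "(norm w)^2 \<le> r^2" using cs(5) zero_le_power2[of rs] by simp
    moreover have "0 \<le> r" using r0 by simp
    ultimately show ?thesis by (rule power2_le_imp_le)
  qed
  have r2w: "r^2 = w \<bullet> w + rs^2"
  proof -
    have "(dist Cq cs)^2 = w \<bullet> w" by (simp add: w_def dist_norm power2_norm_eq_inner)
    thus ?thesis using cs(5) by linarith
  qed
  have cq: "(dist Cq q)^2 = (w - dd) \<bullet> (w - dd) + ee \<bullet> ee"
  proof -
    have eq: "Cq - q = (w - dd) - ee" by (simp add: w_def dd_def ee_def algebra_simps)
    have "(Cq - q) \<bullet> (Cq - q) = (w - dd) \<bullet> (w - dd) - 2 * ((w - dd) \<bullet> ee) + ee \<bullet> ee"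
      unfolding eq by (rule inner_sq_diff)
    moreover have "(w - dd) \<bullet> ee = 0" using we de by (simp add: inner_diff_left)
    ultimately show ?thesis by (simp add: dist_norm power2_norm_eq_inner)
  qed
  have wdd: "\<bar>w \<bullet> w - (w - dd) \<bullet> (w - dd)\<bar> \<le> 2 * r * h + h^2"
  proof -
    have "w \<bullet> w - (w - dd) \<bullet> (w - dd) = 2 * (w \<bullet> dd) - dd \<bullet> dd"
      using inner_sq_diff[of w dd] by simp
    moreover have "\<bar>w \<bullet> dd\<bar> \<le> r * h"
    proof -
      have "\<bar>w \<bullet> dd\<bar> \<le> norm w * norm dd" by (rule Cauchy_Schwarz_ineq2)
      also have "\<dots> \<le> r * h" using nw nd h0 r0 by (intro mult_mono) auto
      finally show ?thesis .
    qed
    moreover have "dd \<bullet> dd = h^2" using nd power2_norm_eq_inner[of dd] by simp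
    ultimately have A: "w \<bullet> w - (w - dd) \<bullet> (w - dd) = 2 * (w \<bullet> dd) - h^2"
       and B1: "w \<bullet> dd \<le> r * h" and B2: "- (w \<bullet> dd) \<le> r * h"
      by (auto dest: abs_le_D1 abs_le_D2)
    have "0 \<le> h^2" by simp
    thus ?thesis using A B1 B2 by (intro abs_leI) linarith+
  qed
  define X where "X = \<bar>(norm ee)^2 - rs^2\<bar>"
  have Xb: "X \<le> 5 * d * e^2 / G^k + 2 * r * h + h^2"
  proof -
    have "(norm ee)^2 - rs^2 = ((dist Cq q)^2 - r^2) + (w \<bullet> w - (w - dd) \<bullet> (w - dd))"
      using cq r2w by (simp add: power2_norm_eq_inner)
    thus ?thesis using Eq wdd unfolding X_def by linarith
  qed
  define Y where "Y = \<bar>norm ee - rs\<bar>"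
  have YX: "rs * Y \<le> X"
  proof -
    have "rs * Y \<le> (norm ee + rs) * Y" using cs(2) by (intro mult_right_mono) (auto simp: Y_def)
    also have "\<dots> = \<bar>(norm ee + rs) * (norm ee - rs)\<bar>"
      unfolding Y_def abs_mult using cs(2) by simp
    also have "(norm ee + rs) * (norm ee - rs) = (norm ee)^2 - rs^2"
      by (simp add: power2_eq_square algebra_simps)
    finally show ?thesis unfolding X_def .
  qed
  obtain z where z: "z \<in> circumsphere (\<tau> - {q})" "dist q' z = Y"
  proof (cases "ee = 0")
    case True
    show ?thesis
    proof (rule that[of v1])
      have "v1 \<in> affine hull (\<tau> - {q})" using v1 by (intro hull_inc) auto
      moreover have "dist cs v1 = rs" using cs(3) v1 by auto
      ultimately show "v1 \<in> circumsphere (\<tau> - {q})" using cs(6,7) by (simp add: circumsphere_def)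
      show "dist q' v1 = Y" using True \<open>dist cs v1 = rs\<close> cs(2) by (simp add: Y_def ee_def)
    qed
  next
    case False
    define z where "z = cs + (rs / norm ee) *\<^sub>R (q' - cs)"
    show ?thesis
    proof (rule that[of z])
      have "z \<in> affine hull (\<tau> - {q})" unfolding z_def
        by (rule mem_affine_3_minus[OF affine_affine_hull cs(1) q'(1) cs(1)])
      moreover have "dist cs z = rs" using False cs(2) by (simp add: z_def dist_norm ee_def[symmetric])
      ultimately show "z \<in> circumsphere (\<tau> - {q})" using cs(6,7) by (simp add: circumsphere_def)
      have "q' - z = (1 - rs / norm ee) *\<^sub>R ee" by (simp add: z_def ee_def algebra_simps)
      hence "dist q' z = \<bar>1 - rs / norm ee\<bar> * norm ee" by (simp add: dist_norm)
      also have "\<dots> = \<bar>(1 - rs / norm ee) * norm ee\<bar>" by (simp add: abs_mult)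
      also have "(1 - rs / norm ee) * norm ee = norm ee - rs" using False by (simp add: field_simps)
      finally show "dist q' z = Y" by (simp add: Y_def)
    qed
  qed
  have idb: "infdist q (circumsphere (\<tau> - {q})) \<le> h + Y"
  proof -
    have "infdist q (circumsphere (\<tau> - {q})) \<le> dist q z" using z(1) by (rule infdist_le)
    also have "\<dots> \<le> dist q q' + dist q' z" by (rule dist_triangle)
    finally show ?thesis using z(2) by (simp add: h_def)
  qed
  define \<alpha> where "\<alpha> = 84 / mu^3 * (d / G^k) + 216 / mu^3 * G"
  have main: "rs * (h + Y) \<le> \<alpha> * rs^2"
  proof -
    define E where "E = 5 * d * e^2 / G^k"
    define Z where "Z = G * e^2 / mu"
    define W where "W = d * e^2 / G^k"
    have Z0: "0 \<le> Z" using G0 mu0 by (simp add: Z_def)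
    have W0: "0 \<le> W" using d0 Gk0 by (simp add: W_def)
    have EW: "E = 5 * W" by (simp add: E_def W_def)
    have W1: "W \<le> W / mu"
    proof -
      have "W * 1 \<le> W * (1 / mu)" using W0 mu0 mu1 by (intro mult_left_mono) (auto simp: le_divide_eq)
      thus ?thesis by simp
    qed
    have "rs * (h + Y) \<le> rs * h + X" using YX by (simp add: distrib_left)
    also have "\<dots> \<le> rs * h + (E + 2 * r * h + h^2)" using Xb by (simp add: E_def)
    also have "\<dots> = h * (rs + 2 * r + h) + E" by (simp add: power2_eq_square algebra_simps)
    also have "\<dots> \<le> h * (411/72 * e) + E"
    proof -
      have "rs + 2 * r + h \<le> 411/72 * e" using rsr rb2 hL Le by linarith
      hence "h * (rs + 2 * r + h) \<le> h * (411/72 * e)" using h0 by (rule mult_left_mono)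
      thus ?thesis by linarith
    qed
    also have "\<dots> \<le> (169/18 * G * e / mu) * (411/72 * e) + E"
    proof -
      have "h * (411/72 * e) \<le> (169/18 * G * e / mu) * (411/72 * e)"
        using hG e0 by (intro mult_right_mono) auto
      thus ?thesis by linarith
    qed
    also have "(169/18 * G * e / mu) * (411/72 * e) = 69459/1296 * Z"
      by (simp add: Z_def power2_eq_square)
    also have "69459/1296 * Z + E \<le> 54 * Z + 21 * W / mu" using Z0 W0 W1 EW by linarith
    also have "54 * Z + 21 * W / mu = \<alpha> * (mu * e / 2)^2"
      using mu0 Gk0 by (simp add: \<alpha>_def Z_def W_def power2_eq_square power3_eq_cube field_simps)
    also have "\<alpha> * (mu * e / 2)^2 \<le> \<alpha> * rs^2"
    proof (rule mult_left_mono)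
      show "(mu * e / 2)^2 \<le> rs^2" using rslow mu0 e0 by (intro power_mono) auto
      show "0 \<le> \<alpha>" using mu0 d0 Gk0 G0 by (simp add: \<alpha>_def)
    qed
    finally show ?thesis .
  qed
  have fin_b: "h + Y \<le> \<alpha> * rs"
  proof -
    have "rs * (h + Y) \<le> rs * (\<alpha> * rs)" using main by (simp add: power2_eq_square algebra_simps)
    thus ?thesis using cs(2) by simp
  qed
  show ?thesis
  proof (intro exI[of _ rs] conjI)
    show "0 < rs" by (rule cs(2))
    show "circumradius (\<tau> - {q}) = ereal rs" by (rule cs(6))
    show "infdist q (circumsphere (\<tau> - {q})) \<le> (84 / mu^3 * (d / G^k) + 216 / mu^3 * G) * rs"
      using idb fin_b by (simp add: \<alpha>_def)
    show "rs < (1 + 3 * d / (mu * G^k)) * e" using rsr rb1 by linarith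
  qed
qed
theorem mainTheorem8:
  fixes P' \<tau> :: "'a::euclidean_space set"
    and \<mu>' \<epsilon>' \<Gamma>0 \<delta>0 :: real and k :: nat
  assumes "is_net \<mu>' \<epsilon>' P'"
    and "0 < \<Gamma>0" and "\<Gamma>0 \<le> 1"
    and "0 \<le> \<delta>0"
    and "forbidden_config P' \<mu>' \<epsilon>' \<Gamma>0 \<delta>0 k \<tau>"
  shows "(\<delta>0 \<le> \<mu>'^2 * \<Gamma>0^k / 6 \<longrightarrow>
           (\<forall>p\<in>\<tau>. circumradius (\<tau> - {p}) < \<infinity> \<and>
              infdist p (circumsphere (\<tau> - {p}))
                \<le> (84 / \<mu>'^3 * (\<delta>0 / \<Gamma>0^k) + 216 / \<mu>'^3 * \<Gamma>0)
                   * real_of_ereal (circumradius (\<tau> - {p})) \<and>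
              circumradius (\<tau> - {p}) < ereal ((1 + 3 * \<delta>0 / (\<mu>' * \<Gamma>0^k)) * \<epsilon>')))
       \<and> (\<delta>0 \<le> \<mu>'^2 * \<Gamma>0^DIM('a) / 6 \<longrightarrow>
           hoop ((6 / \<mu>')^3 * (\<Gamma>0 + \<delta>0 / \<Gamma>0^DIM('a))) \<tau>)"
proof -
  have mu0: "0 < \<mu>'" using assms(1) by (simp add: is_net_def)
  have kD: "k \<le> DIM('a)" using assms(5) by (simp add: forbidden_config_def)
  have P1: "\<forall>p\<in>\<tau>. circumradius (\<tau> - {p}) < \<infinity> \<and>
              infdist p (circumsphere (\<tau> - {p}))
                \<le> (84 / \<mu>'^3 * (\<delta>0 / \<Gamma>0^k) + 216 / \<mu>'^3 * \<Gamma>0)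
                   * real_of_ereal (circumradius (\<tau> - {p})) \<and>
              circumradius (\<tau> - {p}) < ereal ((1 + 3 * \<delta>0 / (\<mu>' * \<Gamma>0^k)) * \<epsilon>')"
    if ds: "\<delta>0 \<le> \<mu>'^2 * \<Gamma>0^k / 6"
  proof
    fix p assume p: "p \<in> \<tau>"
    obtain rs where rs: "0 < rs" "circumradius (\<tau> - {p}) = ereal rs"
      "infdist p (circumsphere (\<tau> - {p})) \<le> (84 / \<mu>'^3 * (\<delta>0 / \<Gamma>0^k) + 216 / \<mu>'^3 * \<Gamma>0) * rs"
      "rs < (1 + 3 * \<delta>0 / (\<mu>' * \<Gamma>0^k)) * \<epsilon>'"
      using main_bound[OF assms(1-5) ds p] by blast
    show "circumradius (\<tau> - {p}) < \<infinity> \<and>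
              infdist p (circumsphere (\<tau> - {p}))
                \<le> (84 / \<mu>'^3 * (\<delta>0 / \<Gamma>0^k) + 216 / \<mu>'^3 * \<Gamma>0)
                   * real_of_ereal (circumradius (\<tau> - {p})) \<and>
              circumradius (\<tau> - {p}) < ereal ((1 + 3 * \<delta>0 / (\<mu>' * \<Gamma>0^k)) * \<epsilon>')"
      using rs by simp
  qed
  have P2: "hoop ((6 / \<mu>')^3 * (\<Gamma>0 + \<delta>0 / \<Gamma>0^DIM('a))) \<tau>"
    if ds: "\<delta>0 \<le> \<mu>'^2 * \<Gamma>0^DIM('a) / 6"
  proof -
    have pw: "\<Gamma>0^DIM('a) \<le> \<Gamma>0^k" using kD assms(2,3) by (intro power_decreasing) auto
    have pm: "0 < \<Gamma>0^DIM('a)" using assms(2) by simp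
    have "\<mu>'^2 * \<Gamma>0^DIM('a) \<le> \<mu>'^2 * \<Gamma>0^k" using pw by (intro mult_left_mono) auto
    hence ds': "\<delta>0 \<le> \<mu>'^2 * \<Gamma>0^k / 6" using ds by linarith
    have q1: "\<delta>0 / \<Gamma>0^k \<le> \<delta>0 / \<Gamma>0^DIM('a)"
      using pw pm assms(4) by (intro divide_left_mono) auto
    have c0: "0 \<le> 1 / \<mu>'^3" using mu0 by simp
    have c1: "0 \<le> \<delta>0 / \<Gamma>0^k" using assms(2,4) by simp
    have al: "84 / \<mu>'^3 * (\<delta>0 / \<Gamma>0^k) + 216 / \<mu>'^3 * \<Gamma>0
        \<le> (6 / \<mu>')^3 * (\<Gamma>0 + \<delta>0 / \<Gamma>0^DIM('a))"
    proof -
      have "84 * (\<delta>0 / \<Gamma>0^k) \<le> 216 * (\<delta>0 / \<Gamma>0^DIM('a))" using q1 c1 by linarith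
      hence "(1 / \<mu>'^3) * (84 * (\<delta>0 / \<Gamma>0^k)) \<le> (1 / \<mu>'^3) * (216 * (\<delta>0 / \<Gamma>0^DIM('a)))"
        using c0 by (rule mult_left_mono)
      moreover have "(6 / \<mu>')^3 = 216 / \<mu>'^3" by (simp add: power_divide)
      ultimately show ?thesis by (simp add: distrib_left)
    qed
    show ?thesis unfolding hoop_def
    proof
      fix p assume p: "p \<in> \<tau>"
      obtain rs where rs: "0 < rs" "circumradius (\<tau> - {p}) = ereal rs"
        "infdist p (circumsphere (\<tau> - {p})) \<le> (84 / \<mu>'^3 * (\<delta>0 / \<Gamma>0^k) + 216 / \<mu>'^3 * \<Gamma>0) * rs"
        using main_bound[OF assms(1-5) ds' p] by blast
      have "(84 / \<mu>'^3 * (\<delta>0 / \<Gamma>0^k) + 216 / \<mu>'^3 * \<Gamma>0) * rs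
          \<le> (6 / \<mu>')^3 * (\<Gamma>0 + \<delta>0 / \<Gamma>0^DIM('a)) * rs"
        using al rs(1) by (intro mult_right_mono) auto
      with rs(3) have "infdist p (circumsphere (\<tau> - {p})) \<le> (6 / \<mu>')^3 * (\<Gamma>0 + \<delta>0 / \<Gamma>0^DIM('a)) * rs"
        by (rule order_trans)
      thus "circumradius (\<tau> - {p}) < \<infinity> \<and>
          infdist p (circumsphere (\<tau> - {p})) \<le> (6 / \<mu>')^3 * (\<Gamma>0 + \<delta>0 / \<Gamma>0^DIM('a))
            * real_of_ereal (circumradius (\<tau> - {p}))"
        using rs(2) by simp
    qed
  qed
  show ?thesis using P1 P2 by blast
qed

end
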